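(* For all positive integers $n$ and $K\ge 2$, $$\min_{n=n_1\ge n_2\ge\cdots\ge n_{K-1}\ge n_K\ge1}\left(\sum_{k=1}^{K-1}\frac{n\cdot n_k}{\sqrt{n_{k+1}}}+n_{K-1}\cdot n_K\right)=O(K)\cdot n^{1.5+\frac{1}{6(2^{K-1}-1)}},$$ where the minimum is over real numbers $n_1,\dots,n_K$ and the $O(\cdot)$ hides an absolute constant. *)

theory Defs
  imports Complex_Main
begin

definition feasible_chain :: "nat \<Rightarrow> nat \<Rightarrow> (nat \<Rightarrow> real) \<Rightarrow> bool" where
  "feasible_chain n K x \<longleftrightarrow>
     x 1 = real n \<and> (\<forall>k\<in>{1..<K}. x (Suc k) \<le> x k) \<and> x K \<ge> 1"

definition chain_cost :: "nat \<Rightarrow> nat \<Rightarrow> (nat \<Rightarrow> real) \<Rightarrow> real" where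
  "chain_cost n K x =
     (\<Sum>k=1..K-1. real n * x k / sqrt (x (Suc k))) + x (K-1) * x K"

end

theory Submission
  imports Defs
begin

lemma chain_ge:
  assumes "feasible_chain n K x" "1 \<le> k" "k \<le> K"
  shows "x K \<le> x k"
  using assms(3,2)
proof (induction k rule: inc_induct)
  case base
  then show ?case by simp
next
  case (step m)
  then have "x (Suc m) \<le> x m" using assms(1) unfolding feasible_chain_def by auto
  with step show ?case by simp
qed

lemma chain_pos:
  assumes "feasible_chain n K x" "1 \<le> k" "k \<le> K"
  shows "1 \<le> x k"
  using chain_ge[OF assms] assms(1) unfolding feasible_chain_def by linarith

lemma cost_nonneg:
  assumes "feasible_chain n K x" "K \<ge> 2"
  shows "0 \<le> chain_cost n K x"
proof -
  have "0 \<le> (\<Sum>k=1..K-1. real n * x k / sqrt (x (Suc k)))"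
  proof (rule sum_nonneg)
    fix k assume "k \<in> {1..K-1}"
    then have "1 \<le> x k" "1 \<le> x (Suc k)" using chain_pos[OF assms(1)] by auto
    then show "0 \<le> real n * x k / sqrt (x (Suc k))" by simp
  qed
  moreover have "1 \<le> x (K-1)" "1 \<le> x K" using chain_pos[OF assms(1)] assms(2) by auto
  ultimately show ?thesis unfolding chain_cost_def
    by (smt (verit) mult_nonneg_nonneg)
qed

lemma term_eq:
  assumes "(n::real) > 0"
  shows "n * n powr a / sqrt (n powr b) = n powr (1 + a - b/2)"
proof -
  have "sqrt (n powr b) = n powr (b/2)"
    using assms by (simp add: powr_half_sqrt[symmetric] powr_powr)
  then show ?thesis using assms
    by (simp add: powr_diff powr_add)
qed

theorem claim3p6:
  shows "\<exists>C::real. \<forall>n K::nat. n \<ge> 1 \<longrightarrow> K \<ge> 2 \<longrightarrow>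
    Inf {chain_cost n K x | x. feasible_chain n K x}
      \<le> C * real K * real n powr (3/2 + 1 / (6 * (2 ^ (K - 1) - 1)))"
proof (intro exI[of _ 1] allI impI)
  fix n K :: nat
  assume n: "n \<ge> 1" and K: "K \<ge> 2"
  define e :: real where "e = 1 / (6 * (2 ^ (K - 1) - 1))"
  define E :: real where "E = 3/2 + e"
  define x where "x = (\<lambda>k::nat. real n powr (1 + 2*e - 2^k * e))"
  have np: "real n > 0" using n by simp
  have n1: "real n \<ge> 1" using n by simp
  have p2: "(2::real) ^ (K-1) \<ge> 2" using K
  proof -
    have "(2::real) ^ 1 \<le> 2 ^ (K-1)" using K by (intro power_increasing) auto
    then show ?thesis by simp
  qed
  have e0: "e > 0" unfolding e_def using p2 by simp
  have ee: "e * (2 ^ (K-1) - 1) = 1/6" unfolding e_def using p2 by simp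
  have pK: "(2::real) ^ K = 2 * 2 ^ (K-1)" using K
  proof -
    have "K = Suc (K-1)" using K by simp
    then show ?thesis by (metis power_Suc)
  qed
  have feas: "feasible_chain n K x"
    unfolding feasible_chain_def
  proof (intro conjI ballI)
    show "x 1 = real n" unfolding x_def using np by simp
  next
    fix k assume "k \<in> {1..<K}"
    have "(2::real)^k * e \<le> 2^(Suc k) * e" using e0 by simp
    then show "x (Suc k) \<le> x k" unfolding x_def
      by (intro powr_mono n1) linarith
  next
    have "1 + 2*e - 2^K * e = 2/3" using pK ee by (simp add: algebra_simps)
    then have "x K = real n powr (2/3)" unfolding x_def by (simp only:)
    then show "1 \<le> x K" using n1 by (simp add: ge_one_powr_ge_zero)
  qed
  have cost: "chain_cost n K x = real K * real n powr E"
  proof -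
    have "(\<Sum>k=1..K-1. real n * x k / sqrt (x (Suc k))) = (\<Sum>k=1..K-1. real n powr E)"
    proof (rule sum.cong)
      fix k assume "k \<in> {1..K-1}"
      have "1 + (1 + 2*e - 2^k * e) - (1 + 2*e - 2^(Suc k) * e)/2 = E"
        unfolding E_def by (simp add: field_simps)
      then show "real n * x k / sqrt (x (Suc k)) = real n powr E"
        unfolding x_def using term_eq[OF np] by simp
    qed simp
    also have "\<dots> = real (K-1) * real n powr E" by simp
    finally have s: "(\<Sum>k=1..K-1. real n * x k / sqrt (x (Suc k))) = real (K-1) * real n powr E" .
    have "(1 + 2*e - 2^(K-1) * e) + (1 + 2*e - 2^K * e) = E"
      unfolding E_def using pK ee by (simp add: algebra_simps)
    then have l: "x (K-1) * x K = real n powr E"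
      unfolding x_def using np by (simp add: powr_add[symmetric])
    show ?thesis unfolding chain_cost_def s l using K by (simp add: algebra_simps of_nat_diff)
  qed
  have bdd: "bdd_below {chain_cost n K x | x. feasible_chain n K x}"
    using cost_nonneg K by (intro bdd_belowI[of _ 0]) auto
  have "Inf {chain_cost n K x | x. feasible_chain n K x} \<le> chain_cost n K x"
    using feas by (intro cInf_lower bdd) auto
  then show "Inf {chain_cost n K x | x. feasible_chain n K x}
      \<le> 1 * real K * real n powr (3/2 + 1 / (6 * (2 ^ (K - 1) - 1)))"
    using cost unfolding E_def e_def by simp
qed

end
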